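(* For every task $h:\{-1,1\}^m\to\{-1,1\}$ (only its values on $\mathcal{X}$ mattering) we have $\deg(\mathcal{H}_{\min}(h))\le d$; that is, there exists $f:\{-1,1\}^m\to\mathbb{R}$ with $f=h$ on $\mathcal{X}$ and $\deg(f)\le d$.
   Context: Setup: integers $m\ge d\ge1$, $\mathcal{Z}=\{-1,1\}^d$, $\psi:\mathcal{Z}\to\{-1,1\}^m$ injective, $\mathcal{X}:=\psi(\mathcal{Z})$ (so $|\mathcal{X}|=2^d$). For $f:\{-1,1\}^n\to\mathbb{R}$, $f=\sum_{S\subseteq[n]}\hat f(S)\chi_S$ with $\chi_S(x)=\prod_{i\in S}x_i$ and $\deg(f)=\max\{|S|:\hat f(S)\ne0\}$. $\mathcal{H}(h)$ is the set of $f:\{-1,1\}^m\to\mathbb{R}$ agreeing with $h$ on $\mathcal{X}$, and $\deg(\mathcal{H}_{\min}(h))$ is the minimum degree of an element of $\mathcal{H}(h)$. *)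

theory Defs
  imports "HOL-Analysis.Analysis"
begin

text \<open>The hypercube {-1,1}^n, points represented as functions nat => real
  with coordinates 0..n-1 in {-1,1} and all other coordinates 0.\<close>
definition cube :: "nat \<Rightarrow> (nat \<Rightarrow> real) set" where
  "cube n = {x. (\<forall>i<n. x i = -1 \<or> x i = 1) \<and> (\<forall>i\<ge>n. x i = 0)}"

definition chi :: "nat set \<Rightarrow> (nat \<Rightarrow> real) \<Rightarrow> real" where
  "chi S x = (\<Prod>i\<in>S. x i)"

definition fourier_coeff :: "nat \<Rightarrow> ((nat \<Rightarrow> real) \<Rightarrow> real) \<Rightarrow> nat set \<Rightarrow> real" where
  "fourier_coeff n f S = (\<Sum>x\<in>cube n. f x * chi S x) / 2 ^ n"

definition fdeg :: "nat \<Rightarrow> ((nat \<Rightarrow> real) \<Rightarrow> real) \<Rightarrow> nat" where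
  "fdeg n f = Max ({card S | S. S \<subseteq> {..<n} \<and> fourier_coeff n f S \<noteq> 0} \<union> {0})"

end

theory Submission
  imports Defs
begin

inductive lowdeg :: "nat \<Rightarrow> nat \<Rightarrow> ((nat\<Rightarrow>real)\<Rightarrow>real) \<Rightarrow> bool" for m d where
  lchi: "S \<subseteq> {..<m} \<Longrightarrow> card S \<le> d \<Longrightarrow> lowdeg m d (\<lambda>x. c * chi S x)"
| ladd: "lowdeg m d f \<Longrightarrow> lowdeg m d g \<Longrightarrow> lowdeg m d (\<lambda>x. f x + g x)"

lemma lowdeg_mono: "lowdeg m d f \<Longrightarrow> m \<le> m' \<Longrightarrow> d \<le> d' \<Longrightarrow> lowdeg m' d' f"
proof (induction rule: lowdeg.induct)
  case (lchi S c) then show ?case by (intro lowdeg.lchi) auto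
next
  case (ladd f g) then show ?case by (intro lowdeg.ladd) auto
qed

lemma lowdeg_const: "lowdeg m d (\<lambda>x. c)"
  using lowdeg.lchi[of "{}" m d c] by (simp add: chi_def)

lemma lowdeg_times: "lowdeg m d f \<Longrightarrow> lowdeg (Suc m) (Suc d) (\<lambda>x. x m * f x)"
proof (induction rule: lowdeg.induct)
  case (lchi S c)
  have fin: "finite S" using lchi(1) finite_subset by blast
  have "m \<notin> S" using lchi(1) by auto
  hence eq: "(\<lambda>x. x m * (c * chi S x)) = (\<lambda>x. c * chi (insert m S) x)"
    using fin by (intro ext) (simp add: chi_def)
  moreover have "lowdeg (Suc m) (Suc d) (\<lambda>x. c * chi (insert m S) x)"
    using lchi fin \<open>m \<notin> S\<close> by (intro lowdeg.lchi) auto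
  ultimately show ?case by (simp only: eq)
next
  case (ladd f g)
  have "lowdeg (Suc m) (Suc d) (\<lambda>x. (x m * f x) + (x m * g x))"
    using ladd by (intro lowdeg.ladd)
  then show ?case by (simp add: distrib_left)
qed

lemma lowdeg_upd: "lowdeg m d f \<Longrightarrow> f (x(m := v)) = f x"
proof (induction rule: lowdeg.induct)
  case (lchi S c)
  have "chi S (x(m:=v)) = chi S x" unfolding chi_def
    using lchi(1) by (intro prod.cong) auto
  then show ?case by (simp only:)
qed simp

lemma cube_0: "cube 0 = {\<lambda>_. 0}"
  unfolding cube_def by auto

lemma cube_Suc: "cube (Suc n) = (\<lambda>y. y(n:=1)) ` cube n \<union> (\<lambda>y. y(n:=-1)) ` cube n"
proof (intro equalityI subsetI)
  fix x assume x: "x \<in> cube (Suc n)"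
  have r: "x(n:=0) \<in> cube n" using x unfolding cube_def by auto
  have "x n = 1 \<or> x n = -1" using x unfolding cube_def by auto
  then show "x \<in> (\<lambda>y. y(n:=1)) ` cube n \<union> (\<lambda>y. y(n:=-1)) ` cube n"
  proof
    assume "x n = 1" hence "x = (x(n:=0))(n:=1)" by auto
    thus ?thesis using r by blast
  next
    assume "x n = -1" hence "x = (x(n:=0))(n:=-1)" by auto
    thus ?thesis using r by blast
  qed
next
  fix x assume "x \<in> (\<lambda>y. y(n:=1)) ` cube n \<union> (\<lambda>y. y(n:=-1)) ` cube n"
  then obtain y v where y: "y \<in> cube n" "v = 1 \<or> v = -1" "x = y(n:=v)" by blast
  show "x \<in> cube (Suc n)" unfolding cube_def
  proof (intro CollectI conjI allI impI)
    fix i assume "i < Suc n"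
    then show "x i = -1 \<or> x i = 1" using y unfolding cube_def
      by (cases "i = n") auto
  next
    fix i assume "Suc n \<le> i"
    then show "x i = 0" using y unfolding cube_def by auto
  qed
qed

lemma cube_fin_card: "finite (cube n) \<and> card (cube n) \<le> 2^n"
proof (induction n)
  case 0 then show ?case by (simp add: cube_0)
next
  case (Suc n)
  have "card (cube (Suc n)) \<le> card ((\<lambda>y. y(n:=1)) ` cube n) + card ((\<lambda>y. y(n:=-1)) ` cube n)"
    unfolding cube_Suc by (rule card_Un_le)
  also have "\<dots> \<le> card (cube n) + card (cube n)"
    by (intro add_mono card_image_le) (use Suc in auto)
  finally show ?case using Suc by (simp add: cube_Suc)
qed

lemma orth:
  assumes "S \<subseteq> {..<m}" "T \<subseteq> {..<m}" "S \<noteq> T"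
  shows "(\<Sum>x\<in>cube m. chi S x * chi T x) = 0"
proof -
  obtain i where i: "i \<in> S \<and> i \<notin> T \<or> i \<in> T \<and> i \<notin> S" using assms(3) by blast
  have im: "i < m" using i assms by auto
  have fS: "finite S" "finite T" using assms finite_subset by auto
  define fl where "fl x = x(i := - x i)" for x :: "nat \<Rightarrow> real"
  have flfl: "fl (fl x) = x" for x unfolding fl_def by auto
  have flc: "fl x \<in> cube m" if "x \<in> cube m" for x
    using that im unfolding fl_def cube_def by auto
  have chifl: "chi U (fl x) = (if i \<in> U then - chi U x else chi U x)" if "finite U" for U x
  proof (cases "i \<in> U")
    case True
    have "chi U (fl x) = fl x i * (\<Prod>j\<in>U-{i}. fl x j)"
      unfolding chi_def using that True by (simp add: prod.remove)
    also have "(\<Prod>j\<in>U-{i}. fl x j) = (\<Prod>j\<in>U-{i}. x j)"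
      by (intro prod.cong) (auto simp: fl_def)
    also have "fl x i * \<dots> = - chi U x"
      unfolding chi_def using that True by (simp add: prod.remove fl_def)
    finally show ?thesis using True by simp
  next
    case False
    have "chi U (fl x) = chi U x" unfolding chi_def
      by (intro prod.cong) (use False in \<open>auto simp: fl_def\<close>)
    thus ?thesis using False by simp
  qed
  have neg: "chi S (fl x) * chi T (fl x) = - (chi S x * chi T x)" for x
    using i by (auto simp: chifl fS)
  have "(\<Sum>x\<in>cube m. chi S x * chi T x) = (\<Sum>x\<in>cube m. chi S (fl x) * chi T (fl x))"
    by (rule sum.reindex_bij_witness[where i=fl and j=fl]) (auto simp: flfl flc)
  also have "\<dots> = - (\<Sum>x\<in>cube m. chi S x * chi T x)"
    by (simp add: neg sum_negf)
  finally show ?thesis by simp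
qed

lemma lowdeg_coeff:
  "lowdeg m d f \<Longrightarrow> T \<subseteq> {..<m} \<Longrightarrow> d < card T \<Longrightarrow> fourier_coeff m f T = 0"
proof (induction rule: lowdeg.induct)
  case (lchi S c)
  have "S \<noteq> T" using lchi by auto
  have "(\<Sum>x\<in>cube m. c * chi S x * chi T x) = c * (\<Sum>x\<in>cube m. chi S x * chi T x)"
    by (simp add: sum_distrib_left mult.assoc)
  also have "\<dots> = 0" using orth[OF lchi(1) lchi(3) \<open>S \<noteq> T\<close>] by simp
  finally show ?case unfolding fourier_coeff_def by simp
next
  case (ladd f g)
  then show ?case unfolding fourier_coeff_def
    by (simp add: distrib_right sum.distrib add_divide_distrib)
qed

lemma lowdeg_fdeg: "lowdeg m d f \<Longrightarrow> fdeg m f \<le> d"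
proof -
  assume L: "lowdeg m d f"
  let ?A = "{card S | S. S \<subseteq> {..<m} \<and> fourier_coeff m f S \<noteq> 0}"
  have fin: "finite ?A"
  proof (rule finite_subset[where B="card ` Pow {..<m}"])
    show "?A \<subseteq> card ` Pow {..<m}" by blast
  qed simp
  have "\<forall>a\<in>?A. a \<le> d"
  proof
    fix a assume "a \<in> ?A"
    then obtain S where S: "a = card S" "S \<subseteq> {..<m}" "fourier_coeff m f S \<noteq> 0" by blast
    show "a \<le> d"
    proof (rule ccontr)
      assume "\<not> a \<le> d"
      then have "fourier_coeff m f S = 0" using lowdeg_coeff[OF L S(2)] S(1) by simp
      then show False using S(3) by simp
    qed
  qed
  thus ?thesis unfolding fdeg_def using fin by (subst Max_le_iff) auto
qed

lemma interp_small:
  assumes "card X \<le> 1" "finite X"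
  shows "\<exists>f. lowdeg m d f \<and> (\<forall>x\<in>X. f x = g x)"
proof (cases "X = {}")
  case True then show ?thesis using lowdeg_const by blast
next
  case False
  then obtain a where "X = {a}" using assms
    by (metis One_nat_def card_0_eq card_1_singletonE le_Suc_eq le_zero_eq)
  then show ?thesis using lowdeg_const[of m d "g a"] by auto
qed


lemma interp:
  "X \<subseteq> cube k \<Longrightarrow> card X \<le> 2^d \<Longrightarrow> \<exists>f. lowdeg k d f \<and> (\<forall>x\<in>X. f x = g x)"
proof (induction k arbitrary: d X g)
  case 0
  have "card X \<le> 1" "finite X" using 0(1) card_mono[of "cube 0" X] by (auto simp: cube_0 finite_subset)
  then show ?case by (rule interp_small)
next
  case (Suc k)
  have finX: "finite X" using Suc(2) cube_fin_card finite_subset by blast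
  show ?case
  proof (cases d)
    case 0
    then show ?thesis using Suc(3) finX interp_small by auto
  next
    case (Suc e)
    define up where "up y = y(k:=1)" for y :: "nat \<Rightarrow> real"
    define dn where "dn y = y(k:=-1)" for y :: "nat \<Rightarrow> real"
    define A where "A = {y\<in>cube k. up y \<in> X}"
    define B where "B = {y\<in>cube k. dn y \<in> X}"
    have ck0: "y k = 0" if "y \<in> cube k" for y using that unfolding cube_def by auto
    have injup: "inj_on up (cube k)"
    proof (rule inj_onI)
      fix a b assume "a \<in> cube k" "b \<in> cube k" "up a = up b"
      then have "(up a)(k:=0) = (up b)(k:=0)" by simp
      moreover have "(up a)(k:=0) = a" "(up b)(k:=0) = b" unfolding up_def
        using ck0 \<open>a \<in> cube k\<close> \<open>b \<in> cube k\<close> by auto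
      ultimately show "a = b" by simp
    qed
    have injdn: "inj_on dn (cube k)"
    proof (rule inj_onI)
      fix a b assume "a \<in> cube k" "b \<in> cube k" "dn a = dn b"
      then have "(dn a)(k:=0) = (dn b)(k:=0)" by simp
      moreover have "(dn a)(k:=0) = a" "(dn b)(k:=0) = b" unfolding dn_def
        using ck0 \<open>a \<in> cube k\<close> \<open>b \<in> cube k\<close> by auto
      ultimately show "a = b" by simp
    qed
    have Xeq: "X = up ` A \<union> dn ` B"
    proof (intro equalityI subsetI)
      fix x assume x: "x \<in> X"
      then have "x \<in> cube (Suc k)" using Suc.prems by auto
      then obtain y where "y \<in> cube k" "x = up y \<or> x = dn y"
        unfolding cube_Suc up_def dn_def by blast
      then show "x \<in> up ` A \<union> dn ` B" using x unfolding A_def B_def by auto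
    qed (auto simp: A_def B_def)
    have finc: "finite (cube k)" using cube_fin_card by blast
    have fA: "finite A" "finite B" unfolding A_def B_def using finc by auto
    have disj: "up ` A \<inter> dn ` B = {}" unfolding up_def dn_def
    proof (safe)
      fix y z :: "nat \<Rightarrow> real" assume "y(k := 1) = z(k := - 1)"
      then have "(y(k := 1)) k = (z(k := - 1)) k" by simp
      then show "y(k:=1) \<in> {}" by simp
    qed
    have cX: "card X = card A + card B"
      unfolding Xeq using card_Un_disjoint[OF _ _ disj] fA
        card_image[OF inj_on_subset[OF injup]] card_image[OF inj_on_subset[OF injdn]]
      by (simp add: A_def B_def)
    have "card (A \<inter> B) \<le> card A" "card (A \<inter> B) \<le> card B"
      using fA by (auto intro: card_mono)
    hence "2 * card (A \<inter> B) \<le> 2 * 2^e" using Suc.prems(2) cX \<open>d = Suc e\<close> by simp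
    hence cI: "card (A \<inter> B) \<le> 2^e" by simp
    have cU: "card (A \<union> B) \<le> 2^d" using card_Un_le[of A B] cX Suc.prems(2) by simp
    have subI: "A \<inter> B \<subseteq> cube k" "A \<union> B \<subseteq> cube k" unfolding A_def B_def by auto
    obtain Q where Q: "lowdeg k e Q" "\<forall>y\<in>A \<inter> B. Q y = (g (up y) - g (dn y)) / 2"
      using Suc.IH[OF subI(1) cI, of "\<lambda>y. (g (up y) - g (dn y)) / 2"] by blast
    obtain P where P: "lowdeg k d P" "\<forall>y\<in>A \<union> B. P y = (if y \<in> A \<inter> B then (g (up y) + g (dn y)) / 2
         else if y \<in> A then g (up y) - Q y else g (dn y) + Q y)"
      using Suc.IH[OF subI(2) cU, of "\<lambda>y. if y \<in> A \<inter> B then (g (up y) + g (dn y)) / 2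
         else if y \<in> A then g (up y) - Q y else g (dn y) + Q y"] by blast
    define f where "f x = P x + x k * Q x" for x :: "nat \<Rightarrow> real"
    have l1: "lowdeg (Suc k) d P" using lowdeg_mono[OF P(1), of "Suc k" d] by simp
    have l2: "lowdeg (Suc k) d (\<lambda>x. x k * Q x)" using lowdeg_times[OF Q(1)] \<open>d = Suc e\<close> by simp
    have "lowdeg (Suc k) d f" unfolding f_def using l1 l2 by (rule lowdeg.ladd)
    moreover have "\<forall>x\<in>X. f x = g x"
    proof
      fix x assume "x \<in> X"
      then have "x \<in> up ` A \<or> x \<in> dn ` B" unfolding Xeq by blast
      then show "f x = g x"
      proof
        assume "x \<in> up ` A"
        then obtain y where y: "y \<in> A" "x = up y" by blast
        have "P x = P y" "Q x = Q y" unfolding y(2) up_def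
          using lowdeg_upd[OF P(1)] lowdeg_upd[OF Q(1)] by auto
        moreover have "x k = 1" unfolding y(2) up_def by simp
        ultimately have "f x = P y + Q y" unfolding f_def by simp
        show ?thesis
        proof (cases "y \<in> B")
          case True
          have "P y = (g (up y) + g (dn y)) / 2" using P(2) y True by simp
          moreover have "Q y = (g (up y) - g (dn y)) / 2" using Q(2) y True by simp
          ultimately show ?thesis using \<open>f x = P y + Q y\<close> y(2) by (simp add: field_simps)
        next
          case False
          have "P y = g (up y) - Q y" using P(2) y False by simp
          then show ?thesis using \<open>f x = P y + Q y\<close> y(2) by simp
        qed
      next
        assume "x \<in> dn ` B"
        then obtain y where y: "y \<in> B" "x = dn y" by blast
        have "P x = P y" "Q x = Q y" unfolding y(2) dn_def
          using lowdeg_upd[OF P(1)] lowdeg_upd[OF Q(1)] by auto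
        moreover have "x k = -1" unfolding y(2) dn_def by simp
        ultimately have "f x = P y - Q y" unfolding f_def by simp
        show ?thesis
        proof (cases "y \<in> A")
          case True
          have "P y = (g (up y) + g (dn y)) / 2" using P(2) y True by simp
          moreover have "Q y = (g (up y) - g (dn y)) / 2" using Q(2) y True by simp
          ultimately show ?thesis using \<open>f x = P y - Q y\<close> y(2) by (simp add: field_simps)
        next
          case False
          have "P y = g (dn y) + Q y" using P(2) y False by simp
          then show ?thesis using \<open>f x = P y - Q y\<close> y(2) by simp
        qed
      qed
    qed
    ultimately show ?thesis by blast
  qed
qed

theorem mainTheorem7:
  fixes m d :: nat and \<psi> :: "(nat \<Rightarrow> real) \<Rightarrow> (nat \<Rightarrow> real)"
    and h :: "(nat \<Rightarrow> real) \<Rightarrow> real"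
  assumes "1 \<le> d" and "d \<le> m"
    and "\<psi> \<in> cube d \<rightarrow> cube m" and "inj_on \<psi> (cube d)"
    and "\<forall>x\<in>cube m. h x = -1 \<or> h x = 1"
  shows "\<exists>f :: (nat \<Rightarrow> real) \<Rightarrow> real.
           (\<forall>x\<in>\<psi> ` cube d. f x = h x) \<and> fdeg m f \<le> d"
proof -
  have sub: "\<psi> ` cube d \<subseteq> cube m" using assms(3) by auto
  have "card (\<psi> ` cube d) \<le> 2^d"
    using card_image_le[of "cube d" \<psi>] cube_fin_card[of d] by linarith
  then obtain f where f: "lowdeg m d f" "\<forall>x\<in>\<psi> ` cube d. f x = h x"
    using interp[OF sub] by blast
  have "fdeg m f \<le> d" using f(1) by (rule lowdeg_fdeg)
  then show ?thesis using f(2) by blast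
qed

end
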